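(* Assume $\operatorname{rank}(X)=n$ and that there exists $\tilde A=[\tilde a_1\ \cdots\ \tilde a_s]\in\mathbb{R}^{n\times s}$ with pairwise distinct columns such that $\min_{i\in\mathbb{S}}|I_i(\tilde A)|\ge s\,\nu_n(X)$. Then for every $A\in\mathbb{R}^{n\times s}$, if $\phi(A)=\phi(\tilde A)$ then $\mathrm{set}(A)=\mathrm{set}(\tilde A)$.
   Context: Data: integers $n,s,N\ge1$ and a dataset $\varpi^N=((x_1,y_1),\ldots,(x_N,y_N))$ with $x_t\in\mathbb{R}^n$, $y_t\in\mathbb{R}$; $X=[x_1\ \cdots\ x_N]\in\mathbb{R}^{n\times N}$. Let $\mathbb{T}=\{1,\ldots,N\}$, $\mathbb{S}=\{1,\ldots,s\}$. For $A=[a_1\ \cdots\ a_s]\in\mathbb{R}^{n\times s}$, $\mathrm{set}(A)=\{a_1,\ldots,a_s\}$; $\sigma_A:\mathbb{T}\to\mathbb{S}$ is a switching signal satisfying $\sigma_A(t)\in\arg\min_{i\in\mathbb{S}}|y_t-x_t^\top a_i|$ for all $t$, selected uniquely by a fixed rule depending only on $A$ and the data (among all admissible choices, one maximizing $\min_{i}|I_i(A)|$, ties then broken by assigning the smallest admissible index). $I_i(A)=\{t\in\mathbb{T}:\sigma_A(t)=i\}$. $\phi(A)=\big(y_1-x_1^\top a_{\sigma_A(1)},\ldots,y_N-x_N^\top a_{\sigma_A(N)}\big)^\top$. Genericity index: for $X$ with $\operatorname{rank}(X)=n$, $\nu_n(X)$ is the smallest integer $m$ such that for every $\mathcal{S}\subset\mathbb{T}$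 with $|\mathcal{S}|=m$, the submatrix $X_{\mathcal{S}}$ of columns of $X$ indexed by $\mathcal{S}$ has rank $n$. *)

theory Defs
  imports "HOL-Analysis.Analysis"
begin

text \<open>Data: time indices T = {1..N}, mode indices S = {1..s}; regressors
  x t :: real^'n (so n = CARD('n)), outputs y t :: real.  A parameter matrix
  A = [a_1 ... a_s] is represented by its columns A i, i in {1..s}.
  Switching signals are represented as functions nat => nat that are 0 outside T.\<close>

definition colset :: "nat \<Rightarrow> (nat \<Rightarrow> real^'n) \<Rightarrow> (real^'n) set" where
  "colset s A = A ` {1..s}"

definition admissible_signal ::
  "nat \<Rightarrow> nat \<Rightarrow> (nat \<Rightarrow> real^'n) \<Rightarrow> (nat \<Rightarrow> real) \<Rightarrow> (nat \<Rightarrow> real^'n) \<Rightarrow> (nat \<Rightarrow> nat) \<Rightarrow> bool" where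
  "admissible_signal N s x y A \<sigma> \<longleftrightarrow>
     (\<forall>t\<in>{1..N}. \<sigma> t \<in> {1..s} \<and>
        (\<forall>i\<in>{1..s}. \<bar>y t - x t \<bullet> A (\<sigma> t)\<bar> \<le> \<bar>y t - x t \<bullet> A i\<bar>)) \<and>
     (\<forall>t. t \<notin> {1..N} \<longrightarrow> \<sigma> t = 0)"

definition Iset :: "nat \<Rightarrow> (nat \<Rightarrow> nat) \<Rightarrow> nat \<Rightarrow> nat set" where
  "Iset N \<sigma> i = {t \<in> {1..N}. \<sigma> t = i}"

definition min_count :: "nat \<Rightarrow> nat \<Rightarrow> (nat \<Rightarrow> nat) \<Rightarrow> nat" where
  "min_count N s \<sigma> = Min ((\<lambda>i. card (Iset N \<sigma> i)) ` {1..s})"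

definition best_signals ::
  "nat \<Rightarrow> nat \<Rightarrow> (nat \<Rightarrow> real^'n) \<Rightarrow> (nat \<Rightarrow> real) \<Rightarrow> (nat \<Rightarrow> real^'n) \<Rightarrow> (nat \<Rightarrow> nat) set" where
  "best_signals N s x y A =
     {\<sigma>. admissible_signal N s x y A \<sigma> \<and>
          (\<forall>\<sigma>'. admissible_signal N s x y A \<sigma>' \<longrightarrow> min_count N s \<sigma>' \<le> min_count N s \<sigma>)}"

text \<open>Ties broken by assigning the smallest admissible index, i.e. the
  lexicographically smallest sequence (sigma 1, ..., sigma N).\<close>
definition sigmaA ::
  "nat \<Rightarrow> nat \<Rightarrow> (nat \<Rightarrow> real^'n) \<Rightarrow> (nat \<Rightarrow> real) \<Rightarrow> (nat \<Rightarrow> real^'n) \<Rightarrow> nat \<Rightarrow> nat" where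
  "sigmaA N s x y A =
     (THE \<sigma>. \<sigma> \<in> best_signals N s x y A \<and>
        (\<forall>\<sigma>'\<in>best_signals N s x y A. \<sigma>' \<noteq> \<sigma> \<longrightarrow>
           (map \<sigma> [1..<N+1], map \<sigma>' [1..<N+1]) \<in> lexord {(a, b). a < b}))"

definition I_A ::
  "nat \<Rightarrow> nat \<Rightarrow> (nat \<Rightarrow> real^'n) \<Rightarrow> (nat \<Rightarrow> real) \<Rightarrow> (nat \<Rightarrow> real^'n) \<Rightarrow> nat \<Rightarrow> nat set" where
  "I_A N s x y A i = Iset N (sigmaA N s x y A) i"

definition phi ::
  "nat \<Rightarrow> nat \<Rightarrow> (nat \<Rightarrow> real^'n) \<Rightarrow> (nat \<Rightarrow> real) \<Rightarrow> (nat \<Rightarrow> real^'n) \<Rightarrow> nat \<Rightarrow> real" where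
  "phi N s x y A =
     (\<lambda>t. if t \<in> {1..N} then y t - x t \<bullet> A (sigmaA N s x y A t) else 0)"

text \<open>Rank of the submatrix X_S (column rank = dimension of the column span).\<close>
definition subrank :: "(nat \<Rightarrow> real^'n) \<Rightarrow> nat set \<Rightarrow> nat" where
  "subrank x S = dim (span (x ` S))"

definition nu :: "nat \<Rightarrow> (nat \<Rightarrow> real^'n) \<Rightarrow> nat" where
  "nu N x = (LEAST m. \<forall>S. S \<subseteq> {1..N} \<and> card S = m \<longrightarrow> subrank x S = CARD('n))"

end

theory Submission
  imports Defs
begin

lemma adm_exists:
  fixes x :: "nat \<Rightarrow> real^'n"
  assumes "s \<ge> 1"
  shows "\<exists>\<sigma>. admissible_signal N s x y A \<sigma>"
proof -
  have ex: "\<exists>i\<in>{1..s}. \<forall>j\<in>{1..s}. \<bar>y t - x t \<bullet> A i\<bar> \<le> \<bar>y t - x t \<bullet> A j\<bar>" for t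
  proof -
    let ?f = "\<lambda>i. \<bar>y t - x t \<bullet> A i\<bar>"
    have "finite {1..s}" "{1..s} \<noteq> {}" using assms by auto
    then have "Min (?f ` {1..s}) \<in> ?f ` {1..s}" by (intro Min_in) auto
    then obtain i where i: "i \<in> {1..s}" "?f i = Min (?f ` {1..s})" by force
    have "\<forall>j\<in>{1..s}. ?f i \<le> ?f j" using i by (simp add: \<open>finite {1..s}\<close>)
    then show ?thesis using i by blast
  qed
  define \<sigma> where "\<sigma> t = (if t \<in> {1..N} then (SOME i. i\<in>{1..s} \<and> (\<forall>j\<in>{1..s}. \<bar>y t - x t \<bullet> A i\<bar> \<le> \<bar>y t - x t \<bullet> A j\<bar>)) else 0)" for t
  have h1: "\<forall>t\<in>{1..N}. \<sigma> t\<in>{1..s} \<and> (\<forall>j\<in>{1..s}. \<bar>y t - x t \<bullet> A (\<sigma> t)\<bar> \<le> \<bar>y t - x t \<bullet> A j\<bar>)"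
  proof
    fix t assume t: "t \<in> {1..N}"
    show "\<sigma> t\<in>{1..s} \<and> (\<forall>j\<in>{1..s}. \<bar>y t - x t \<bullet> A (\<sigma> t)\<bar> \<le> \<bar>y t - x t \<bullet> A j\<bar>)"
      unfolding \<sigma>_def using t someI_ex[OF ex[of t, unfolded Bex_def]] by simp
  qed
  have h2: "\<forall>t. t \<notin> {1..N} \<longrightarrow> \<sigma> t = 0" by (simp add: \<sigma>_def)
  have "admissible_signal N s x y A \<sigma>"
    unfolding admissible_signal_def using h1 h2 by blast
  then show ?thesis by blast
qed

lemma best_nonempty:
  fixes x :: "nat \<Rightarrow> real^'n"
  assumes "s \<ge> 1"
  shows "\<exists>\<sigma>. \<sigma> \<in> best_signals N s x y A"
proof -
  obtain \<sigma>0 where a0: "admissible_signal N s x y A \<sigma>0" using adm_exists[OF assms] by blast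
  have bnd: "min_count N s \<sigma> < N + 1" for \<sigma>
  proof -
    have "min_count N s \<sigma> \<le> card (Iset N \<sigma> 1)"
      unfolding min_count_def using assms by (intro Min_le) auto
    also have "\<dots> \<le> card {1..N}" unfolding Iset_def by (rule card_mono) auto
    finally show ?thesis by simp
  qed
  obtain \<sigma> where "admissible_signal N s x y A \<sigma>"
     "\<forall>\<sigma>'. admissible_signal N s x y A \<sigma>' \<longrightarrow> min_count N s \<sigma>' \<le> min_count N s \<sigma>"
    using ex_has_greatest_nat[of "admissible_signal N s x y A" \<sigma>0 "min_count N s" "N+1"] a0 bnd
    by blast
  then show ?thesis unfolding best_signals_def by blast
qed

lemma sigmaA_best:
  fixes x :: "nat \<Rightarrow> real^'n"
  assumes "s \<ge> 1"
  shows "sigmaA N s x y A \<in> best_signals N s x y A"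
proof -
  let ?B = "best_signals N s x y A"
  let ?L = "\<lambda>\<sigma>::nat\<Rightarrow>nat. map \<sigma> [1..<N+1]"
  let ?r = "{(a, b). a < (b::nat)}"
  let ?P = "\<lambda>\<sigma>. \<sigma> \<in> ?B \<and> (\<forall>\<sigma>'\<in>?B. \<sigma>' \<noteq> \<sigma> \<longrightarrow> (?L \<sigma>, ?L \<sigma>') \<in> lexord ?r)"
  have zero: "\<sigma> t = 0" if "\<sigma> \<in> ?B" "t \<notin> {1..N}" for \<sigma> t
    using that unfolding best_signals_def admissible_signal_def by blast
  have inj: "\<sigma> = \<sigma>'" if "\<sigma> \<in> ?B" "\<sigma>' \<in> ?B" "?L \<sigma> = ?L \<sigma>'" for \<sigma> \<sigma>'
  proof
    fix t show "\<sigma> t = \<sigma>' t"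
    proof (cases "t \<in> {1..N}")
      case True
      then have "t \<in> set [1..<N+1]" by auto
      then show ?thesis using that(3) map_eq_conv[of \<sigma> "[1..<N+1]" \<sigma>'] by blast
    next
      case False then show ?thesis using zero[OF that(1) False] zero[OF that(2) False] by simp
    qed
  qed
  have tr: "trans ?r" by (auto simp: trans_def)
  have irr: "(l, l) \<notin> lexord ?r" for l by (rule lexord_irreflexive) auto
  have tot: "total (lexord ?r)" by (rule total_lexord) (auto simp: total_on_def)
  have wfr: "wf (lenlex ?r)" by (intro wf_lenlex wf_less)
  obtain \<sigma>0 where s0: "\<sigma>0 \<in> ?B" using best_nonempty[OF assms] by blast
  have "?L \<sigma>0 \<in> ?L ` ?B" using s0 by blast
  then obtain l where l: "l \<in> ?L ` ?B" and lmin: "\<And>l'. (l', l) \<in> lenlex ?r \<Longrightarrow> l' \<notin> ?L ` ?B"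
    using wfE_min[OF wfr \<open>?L \<sigma>0 \<in> ?L ` ?B\<close>] by blast
  obtain \<sigma> where s: "\<sigma> \<in> ?B" and ls: "l = ?L \<sigma>" using l by blast
  have P: "?P \<sigma>"
  proof (intro conjI ballI impI s)
    fix \<sigma>' assume s': "\<sigma>' \<in> ?B" and ne: "\<sigma>' \<noteq> \<sigma>"
    then have "?L \<sigma>' \<noteq> ?L \<sigma>" using inj[OF s' s] by blast
    then have "(?L \<sigma>, ?L \<sigma>') \<in> lexord ?r \<or> (?L \<sigma>', ?L \<sigma>) \<in> lexord ?r"
      using tot[unfolded total_on_def] by blast
    moreover have "(?L \<sigma>', ?L \<sigma>) \<notin> lexord ?r"
    proof
      assume "(?L \<sigma>', ?L \<sigma>) \<in> lexord ?r"
      then have "(?L \<sigma>', l) \<in> lenlex ?r" using ls by (simp add: lenlex_conv lexord_lex)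
      then show False using lmin s' by blast
    qed
    ultimately show "(?L \<sigma>, ?L \<sigma>') \<in> lexord ?r" by blast
  qed
  have uniq: "\<tau> = \<sigma>" if "?P \<tau>" for \<tau>
  proof (rule ccontr)
    assume ne: "\<tau> \<noteq> \<sigma>"
    have "(?L \<tau>, ?L \<sigma>) \<in> lexord ?r" using that P ne[symmetric] by blast
    moreover have "(?L \<sigma>, ?L \<tau>) \<in> lexord ?r" using that P ne by blast
    ultimately have "(?L \<tau>, ?L \<tau>) \<in> lexord ?r" using lexord_trans tr by blast
    then show False using irr by blast
  qed
  have "?P (sigmaA N s x y A)"
    unfolding sigmaA_def by (rule theI[of ?P \<sigma>, OF P uniq])
  then show ?thesis by blast
qed

lemma sigmaA_range:
  fixes x :: "nat \<Rightarrow> real^'n"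
  assumes "s \<ge> 1" "t \<in> {1..N}"
  shows "sigmaA N s x y A t \<in> {1..s}"
  using sigmaA_best[OF assms(1), of N x y A] assms(2)
  unfolding best_signals_def admissible_signal_def by blast

theorem lemma4:
  fixes N s :: nat and x :: "nat \<Rightarrow> real^'n" and y :: "nat \<Rightarrow> real"
    and At :: "nat \<Rightarrow> real^'n"
  assumes "N \<ge> 1" and "s \<ge> 1"
    and "subrank x {1..N} = CARD('n)"
    and "inj_on At {1..s}"
    and "\<forall>i\<in>{1..s}. card (I_A N s x y At i) \<ge> s * nu N x"
  shows "\<forall>A :: nat \<Rightarrow> real^'n. phi N s x y A = phi N s x y At \<longrightarrow> colset s A = colset s At"
proof (intro allI impI)
  fix A :: "nat \<Rightarrow> real^'n"
  assume ph: "phi N s x y A = phi N s x y At"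
  let ?nu = "nu N x"
  have nuprop: "\<forall>S. S \<subseteq> {1..N} \<and> card S = ?nu \<longrightarrow> subrank x S = CARD('n)"
    unfolding nu_def
  proof (rule LeastI_ex)
    show "\<exists>m. \<forall>S. S \<subseteq> {1..N} \<and> card S = m \<longrightarrow> subrank x S = CARD('n)"
    proof (intro exI[of _ "N+1"] allI impI)
      fix S assume "S \<subseteq> {1..N} \<and> card S = N + 1"
      then have "card S \<le> card {1..N}" by (intro card_mono) auto
      then show "subrank x S = CARD('n)" using \<open>S \<subseteq> {1..N} \<and> card S = N + 1\<close> by simp
    qed
  qed
  have sub: "At i \<in> colset s A" if i: "i \<in> {1..s}" for i
  proof -
    let ?I = "I_A N s x y At i"
    let ?sA = "sigmaA N s x y A"
    have Isub: "?I \<subseteq> {1..N}" unfolding I_A_def Iset_def by auto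
    have finI: "finite ?I" using Isub finite_subset by blast
    let ?G = "\<lambda>j. {t \<in> ?I. ?sA t = j}"
    have "\<exists>j\<in>{1..s}. card (?G j) \<ge> ?nu"
    proof (rule ccontr)
      assume "\<not> ?thesis"
      then have lt: "\<And>j. j \<in> {1..s} \<Longrightarrow> card (?G j) < ?nu" by force
      have "?I = (\<Union>j\<in>{1..s}. ?G j)" using sigmaA_range[OF assms(2)] Isub by blast
      moreover have "card (\<Union>j\<in>{1..s}. ?G j) = (\<Sum>j\<in>{1..s}. card (?G j))"
        by (rule card_UN_disjoint) (use finI in auto)
      ultimately have "card ?I = (\<Sum>j\<in>{1..s}. card (?G j))" by simp
      also have "\<dots> < (\<Sum>j\<in>{1..s}. ?nu)"
        using assms(2) lt by (intro sum_strict_mono) auto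
      also have "\<dots> = s * ?nu" by simp
      finally show False using assms(5) i by force
    qed
    then obtain j where j: "j \<in> {1..s}" and cj: "card (?G j) \<ge> ?nu" by blast
    obtain S where S: "S \<subseteq> ?G j" "card S = ?nu" using obtain_subset_with_card_n[OF cj] by metis
    have SN: "S \<subseteq> {1..N}" using S Isub by blast
    have "dim (x ` S) = CARD('n)"
      using nuprop SN S(2) unfolding subrank_def by simp
    then have "dim (x ` S) = DIM(real^'n)" by simp
    then have full: "span (x ` S) = UNIV" by (simp only: dim_eq_full)
    define d where "d = At i - A j"
    have orth: "d \<bullet> x t = 0" if t: "t \<in> S" for t
    proof -
      have tI: "t \<in> ?I" "?sA t = j" "t \<in> {1..N}" using t S SN by auto
      have "sigmaA N s x y At t = i" using tI(1) unfolding I_A_def Iset_def by simp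
      then have "y t - x t \<bullet> A j = y t - x t \<bullet> At i"
        using fun_cong[OF ph, of t] tI by (simp add: phi_def)
      then show ?thesis unfolding d_def by (simp add: inner_diff_left) (metis inner_commute)
    qed
    have "orthogonal d d"
      by (rule orthogonal_to_span[of d "x ` S" d]) (use full orth in \<open>auto simp: orthogonal_def\<close>)
    then have "d = 0" by (simp add: orthogonal_def)
    then show ?thesis unfolding d_def colset_def using j by auto
  qed
  have sb: "colset s At \<subseteq> colset s A" using sub unfolding colset_def by blast
  have c1: "card (colset s At) = s" unfolding colset_def using assms(4) by (simp add: card_image)
  have c2: "card (colset s A) \<le> s" unfolding colset_def using card_image_le[of "{1..s}" A] by simp
  have fin: "finite (colset s A)" unfolding colset_def by simp
  have "colset s At = colset s A" using card_seteq[OF fin sb] c1 c2 by simp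
  then show "colset s A = colset s At" by simp
qed

end
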